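(* For the localized tent shears described in the context, the projective process $(\phi_n(x),D_x\phi_nu/|D_x\phi_nu|)$ on $\mathbb T^2\times\mathbb P^1$ is irreducible.
   Context: Let $F_0$ be the $1$-periodic piecewise linear function with $F_0(\frac12\pm\frac18)=0$, $F_0(\frac12)=1$, linear on $[\frac38,\frac12]$ and $[\frac12,\frac58]$, and zero on $[0,1]\setminus[\frac38,\frac58]$; $F_\alpha(x)=F_0(x-\alpha)$; $v_{\alpha,1}(x)=(F_\alpha(x_2),0)$, $v_{\alpha,2}(x)=(0,F_\alpha(x_1))$ on $\mathbb T^2$. Let $(\alpha_n,\beta_n,i_n)_{n\ge1}$ be i.i.d. uniform on $[0,1]\times[0,1]\times\{1,2\}$, $V_n=\beta_nv_{\alpha_n,i_n}$, $\varphi^w$ the time-1 flow of $w$, and $\phi_n=\varphi^{V_n}\circ\cdots\circ\varphi^{V_1}$. $\mathbb P^1$ is the space of lines through the origin in $\mathbb R^2$. A Markov chain on state space $E$ is irreducible if for every $z\in E$ and nonempty open $O\subseteq E$ there is $n$ with $\mathbb P(Z_n\in O\mid Z_0=z)>0$. *)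

theory Defs
  imports "HOL-Probability.Probability"
begin

definition F0 :: "real \<Rightarrow> real" where
  "F0 x = (let y = frac x in
           if 3/8 \<le> y \<and> y \<le> 1/2 then 8 * (y - 3/8)
           else if 1/2 < y \<and> y \<le> 5/8 then 8 * (5/8 - y)
           else 0)"

definition Fa :: "real \<Rightarrow> real \<Rightarrow> real" where
  "Fa \<alpha> x = F0 (x - \<alpha>)"

text \<open>Shear vector fields v_{alpha,i}, lifted to the universal cover R^2 of T^2.\<close>
definition vfield :: "real \<Rightarrow> nat \<Rightarrow> real \<times> real \<Rightarrow> real \<times> real" where
  "vfield \<alpha> i x = (if i = 1 then (Fa \<alpha> (snd x), 0) else (0, Fa \<alpha> (fst x)))"

definition flow1 :: "(real \<times> real \<Rightarrow> real \<times> real) \<Rightarrow> real \<times> real \<Rightarrow> real \<times> real" where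
  "flow1 w x = (THE y. y 0 = x \<and> (\<forall>t. (y has_vector_derivative w (y t)) (at t))) 1"

definition M1 :: "(real \<times> real \<times> nat) measure" where
  "M1 = uniform_measure lborel {0..1} \<Otimes>\<^sub>M
        (uniform_measure lborel {0..1} \<Otimes>\<^sub>M uniform_count_measure {1, 2})"

text \<open>I.i.d. sequence: omega k is the parameter of step k+1.\<close>
definition Mseq :: "(nat \<Rightarrow> real \<times> real \<times> nat) measure" where
  "Mseq = PiM UNIV (\<lambda>_. M1)"

definition Vstep :: "(nat \<Rightarrow> real \<times> real \<times> nat) \<Rightarrow> nat \<Rightarrow> real \<times> real \<Rightarrow> real \<times> real" where
  "Vstep \<omega> k = (case \<omega> k of (\<alpha>, \<beta>, i) \<Rightarrow> (\<lambda>x. \<beta> *\<^sub>R vfield \<alpha> i x))"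

primrec phi :: "nat \<Rightarrow> (nat \<Rightarrow> real \<times> real \<times> nat) \<Rightarrow> real \<times> real \<Rightarrow> real \<times> real" where
  "phi 0 \<omega> = id"
| "phi (Suc n) \<omega> = flow1 (Vstep \<omega> n) \<circ> phi n \<omega>"

text \<open>Open subsets of T^2 x P^1 correspond exactly to open subsets of
  R^2 x (R^2 - {0}) that are saturated: invariant under integer translations in the
  first component and under nonzero rescaling in the second component.\<close>
definition proj_open :: "((real \<times> real) \<times> (real \<times> real)) set \<Rightarrow> bool" where
  "proj_open S \<longleftrightarrow> open S \<and> S \<subseteq> UNIV \<times> (UNIV - {0}) \<and>
     (\<forall>y w (k1::int) (k2::int) (c::real). (y, w) \<in> S \<longrightarrow> c \<noteq> 0 \<longrightarrow>
        ((fst y + of_int k1, snd y + of_int k2), c *\<^sub>R w) \<in> S)"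

definition hit_event :: "nat \<Rightarrow> real \<times> real \<Rightarrow> real \<times> real \<Rightarrow>
    ((real \<times> real) \<times> (real \<times> real)) set \<Rightarrow> (nat \<Rightarrow> real \<times> real \<times> nat) set" where
  "hit_event n x u S = {\<omega> \<in> space Mseq. \<exists>L. (phi n \<omega> has_derivative L) (at x) \<and> (phi n \<omega> x, L u) \<in> S}"

end

theory Submission
  imports Defs
begin


lemma frac_interval_ev:
  fixes a b t :: real
  assumes "0 \<le> a" "b \<le> 1" "a < frac t" "frac t < b"
  shows "eventually (\<lambda>x. floor x = floor t \<and> a < frac x \<and> frac x < b) (nhds t)"
proof -
  have o: "open {of_int (floor t) + a <..< of_int (floor t) + b}" by simp
  have t: "t \<in> {of_int (floor t) + a <..< of_int (floor t) + b}"
    using assms by (auto simp: frac_def)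
  have "eventually (\<lambda>x. x \<in> {of_int (floor t) + a <..< of_int (floor t) + b}) (nhds t)"
    using eventually_nhds_in_open[OF o t] .
  then show ?thesis
  proof (rule eventually_mono)
    fix x assume x: "x \<in> {of_int (floor t) + a <..< of_int (floor t) + b}"
    then have "floor x = floor t" using assms by (auto simp: floor_eq_iff)
    then show "floor x = floor t \<and> a < frac x \<and> frac x < b" using x by (auto simp: frac_def)
  qed
qed

lemma F0_alt: "F0 x = max 0 (1 - 8 * \<bar>frac x - 1/2\<bar>)"
  unfolding F0_def Let_def by auto

lemma F0_zero_near_int:
  assumes "x \<in> \<int>" shows "eventually (\<lambda>y. F0 y = 0) (nhds x)"
proof -
  obtain k where k: "x = of_int k" using assms Ints_cases by blast
  have o: "open {x - 1/4 <..< x + 1/4}" by simp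
  have "eventually (\<lambda>y. y \<in> {x - 1/4 <..< x + 1/4}) (nhds x)"
    by (rule eventually_nhds_in_open[OF o]) simp
  then show ?thesis
  proof (rule eventually_mono)
    fix y assume y: "y \<in> {x - 1/4 <..< x + 1/4}"
    show "F0 y = 0"
    proof (cases "y < x")
      case True
      then have "floor y = k - 1" using y k by (auto simp: floor_eq_iff)
      then have "frac y > 3/4" using y k by (auto simp: frac_def)
      then show ?thesis unfolding F0_alt by auto
    next
      case False
      then have "floor y = k" using y k by (auto simp: floor_eq_iff)
      then have "frac y < 1/4" using y k False by (auto simp: frac_def)
      then show ?thesis unfolding F0_alt by auto
    qed
  qed
qed

lemma F0_cont: "isCont F0 t"
proof (cases "t \<in> \<int>")
  case True
  then show ?thesis using isCont_cong[OF F0_zero_near_int[OF True]] by simp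
next
  case False
  then have "0 < frac t" "frac t < 1" using frac_ge_0 frac_lt_1 frac_eq_0_iff by (auto simp: less_le)
  from frac_interval_ev[OF _ _ this] have ev: "eventually (\<lambda>x. floor x = floor t) (nhds t)"
    by (auto elim: eventually_mono)
  have "eventually (\<lambda>x. F0 x = max 0 (1 - 8 * \<bar>x - of_int (floor t) - 1/2\<bar>)) (nhds t)"
    using ev by (rule eventually_mono) (simp add: F0_alt frac_def)
  from isCont_cong[OF this] show ?thesis by (simp add: continuous_intros)
qed

lemma F0_continuous_on: "continuous_on A F0"
  by (simp add: F0_cont continuous_at_imp_continuous_on)

lemma F0_deriv_up:
  assumes "3/8 < frac t" "frac t < 1/2"
  shows "(F0 has_real_derivative 8) (at t)"
proof -
  have ev: "eventually (\<lambda>x. floor x = floor t \<and> 3/8 < frac x \<and> frac x < 1/2) (nhds t)"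
    using frac_interval_ev[of "3/8" "1/2" t] assms by simp
  have e: "eventually (\<lambda>x. F0 x = 8 * (x - of_int (floor t) - 3/8)) (nhds t)"
    using ev by (rule eventually_mono) (auto simp: F0_def frac_def)
  have d: "((\<lambda>x. 8 * (x - of_int (floor t) - 3/8)) has_real_derivative 8) (at t)"
    by (auto intro!: derivative_eq_intros)
  show ?thesis using DERIV_cong_ev[OF refl e refl] d by simp
qed

lemma F0_deriv_down:
  assumes "1/2 < frac t" "frac t < 5/8"
  shows "(F0 has_real_derivative -8) (at t)"
proof -
  have ev: "eventually (\<lambda>x. floor x = floor t \<and> 1/2 < frac x \<and> frac x < 5/8) (nhds t)"
    using frac_interval_ev[of "1/2" "5/8" t] assms by simp
  have e: "eventually (\<lambda>x. F0 x = 8 * (5/8 - (x - of_int (floor t)))) (nhds t)"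
    using ev by (rule eventually_mono) (auto simp: F0_def frac_def)
  have d: "((\<lambda>x. 8 * (5/8 - (x - of_int (floor t)))) has_real_derivative -8) (at t)"
    by (auto intro!: derivative_eq_intros)
  show ?thesis using DERIV_cong_ev[OF refl e refl] d by simp
qed

lemma open_frac_interval:
  fixes a b :: real
  assumes "0 \<le> a" "b \<le> 1" shows "open {t. a < frac t \<and> frac t < b}"
proof (rule open_subopen[THEN iffD2], intro ballI)
  fix t assume t: "t \<in> {t. a < frac t \<and> frac t < b}"
  define T where "T = {of_int (floor t) + a <..< of_int (floor t) + b}"
  have "open T" by (simp add: T_def)
  moreover have "t \<in> T" using t by (simp add: T_def frac_def)
  moreover have "T \<subseteq> {t. a < frac t \<and> frac t < b}"
  proof
    fix x assume x: "x \<in> T"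
    then have "floor x = floor t" using assms by (simp add: T_def floor_eq_iff)
    then show "x \<in> {t. a < frac t \<and> frac t < b}" using x by (simp add: T_def frac_def)
  qed
  ultimately show "\<exists>T. open T \<and> t \<in> T \<and> T \<subseteq> {t. a < frac t \<and> frac t < b}" by blast
qed



definition sh :: "real \<times> real \<times> nat \<Rightarrow> real \<times> real \<Rightarrow> real \<times> real" where
  "sh p z = (case p of (\<alpha>, \<beta>, i) \<Rightarrow>
     if i = 1 then (fst z + \<beta> * F0 (snd z - \<alpha>), snd z) else (fst z, snd z + \<beta> * F0 (fst z - \<alpha>)))"

lemma vd_fst:
  assumes "(Y has_vector_derivative d) (at t)"
  shows "((\<lambda>t. fst (Y t)) has_real_derivative fst d) (at t)"
proof -
  have "((\<lambda>t. fst (Y t)) has_derivative (\<lambda>x. fst (x *\<^sub>R d))) (at t)"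
    using assms unfolding has_vector_derivative_def by (rule has_derivative_fst)
  moreover have "(\<lambda>x. fst (x *\<^sub>R d)) = (*) (fst d)" by (rule ext) simp
  ultimately show ?thesis unfolding has_field_derivative_def by simp
qed

lemma vd_snd:
  assumes "(Y has_vector_derivative d) (at t)"
  shows "((\<lambda>t. snd (Y t)) has_real_derivative snd d) (at t)"
proof -
  have "((\<lambda>t. snd (Y t)) has_derivative (\<lambda>x. snd (x *\<^sub>R d))) (at t)"
    using assms unfolding has_vector_derivative_def by (rule has_derivative_snd)
  moreover have "(\<lambda>x. snd (x *\<^sub>R d)) = (*) (snd d)" by (rule ext) simp
  ultimately show ?thesis unfolding has_field_derivative_def by simp
qed

lemma flow_sh: "flow1 (\<lambda>z. \<beta> *\<^sub>R vfield \<alpha> i z) = sh (\<alpha>, \<beta>, i)"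
proof
  fix z :: "real \<times> real"
  define c where "c = \<beta> *\<^sub>R vfield \<alpha> i z"
  define Y where "Y t = z + t *\<^sub>R c" for t :: real
  have inv: "vfield \<alpha> i (Y t) = vfield \<alpha> i z" for t
    by (simp add: Y_def c_def vfield_def)
  have ex: "Y 0 = z \<and> (\<forall>t. (Y has_vector_derivative \<beta> *\<^sub>R vfield \<alpha> i (Y t)) (at t))"
  proof (intro conjI allI)
    show "Y 0 = z" by (simp add: Y_def)
    fix t
    have "(Y has_vector_derivative c) (at t)"
      unfolding Y_def by (auto intro!: derivative_eq_intros)
    then show "(Y has_vector_derivative \<beta> *\<^sub>R vfield \<alpha> i (Y t)) (at t)"
      by (simp add: inv c_def)
  qed
  have un: "Y' = Y" if h: "Y' 0 = z \<and> (\<forall>t. (Y' has_vector_derivative \<beta> *\<^sub>R vfield \<alpha> i (Y' t)) (at t))" for Y'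
  proof
    fix t
    show "Y' t = Y t"
    proof (cases "i = 1")
      case True
      have "\<forall>s. ((\<lambda>t. snd (Y' t)) has_real_derivative 0) (at s)"
        using vd_snd h True by (fastforce simp: vfield_def)
      then have s: "snd (Y' s) = snd z" for s
        using DERIV_isconst_all[of "\<lambda>t. snd (Y' t)" s 0] h by simp
      have "\<forall>s. ((\<lambda>t. fst (Y' t) - t * fst c) has_real_derivative 0) (at s)"
      proof
        fix s
        have dd: "((\<lambda>t. fst (Y' t)) has_real_derivative fst (\<beta> *\<^sub>R vfield \<alpha> i (Y' s))) (at s)"
          using h vd_fst by blast
        have "((\<lambda>t. fst (Y' t) - t * fst c) has_real_derivative
                fst (\<beta> *\<^sub>R vfield \<alpha> i (Y' s)) - 1 * fst c) (at s)"
        proof (rule DERIV_diff[OF dd])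
          show "((\<lambda>t. t * fst c) has_real_derivative 1 * fst c) (at s)"
            by (intro derivative_eq_intros) auto
        qed
        then show "((\<lambda>t. fst (Y' t) - t * fst c) has_real_derivative 0) (at s)"
          using True s by (simp add: vfield_def c_def)
      qed
      then have "fst (Y' t) - t * fst c = fst (Y' 0) - 0 * fst c"
        using DERIV_isconst_all[of "\<lambda>t. fst (Y' t) - t * fst c" t 0] by simp
      then show ?thesis using s[of t] h True
        by (simp add: Y_def c_def vfield_def prod_eq_iff)
    next
      case False
      have "\<forall>s. ((\<lambda>t. fst (Y' t)) has_real_derivative 0) (at s)"
        using vd_fst h False by (fastforce simp: vfield_def)
      then have s: "fst (Y' s) = fst z" for s
        using DERIV_isconst_all[of "\<lambda>t. fst (Y' t)" s 0] h by simp
      have "\<forall>s. ((\<lambda>t. snd (Y' t) - t * snd c) has_real_derivative 0) (at s)"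
      proof
        fix s
        have dd: "((\<lambda>t. snd (Y' t)) has_real_derivative snd (\<beta> *\<^sub>R vfield \<alpha> i (Y' s))) (at s)"
          using h vd_snd by blast
        have "((\<lambda>t. snd (Y' t) - t * snd c) has_real_derivative
                snd (\<beta> *\<^sub>R vfield \<alpha> i (Y' s)) - 1 * snd c) (at s)"
        proof (rule DERIV_diff[OF dd])
          show "((\<lambda>t. t * snd c) has_real_derivative 1 * snd c) (at s)"
            by (intro derivative_eq_intros) auto
        qed
        then show "((\<lambda>t. snd (Y' t) - t * snd c) has_real_derivative 0) (at s)"
          using False s by (simp add: vfield_def c_def)
      qed
      then have "snd (Y' t) - t * snd c = snd (Y' 0) - 0 * snd c"
        using DERIV_isconst_all[of "\<lambda>t. snd (Y' t) - t * snd c" t 0] by simp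
      then show ?thesis using s[of t] h False
        by (simp add: Y_def c_def vfield_def prod_eq_iff)
    qed
  qed
  have "(THE y. y 0 = z \<and> (\<forall>t. (y has_vector_derivative \<beta> *\<^sub>R vfield \<alpha> i (y t)) (at t))) = Y"
    using ex un by (rule the_equality)
  then have "flow1 (\<lambda>z. \<beta> *\<^sub>R vfield \<alpha> i z) z = Y 1" by (simp add: flow1_def)
  also have "\<dots> = sh (\<alpha>, \<beta>, i) z"
    by (cases z) (simp add: Y_def c_def vfield_def sh_def Fa_def)
  finally show "flow1 (\<lambda>z. \<beta> *\<^sub>R vfield \<alpha> i z) z = sh (\<alpha>, \<beta>, i) z" .
qed

lemma flow_Vstep: "flow1 (Vstep \<omega> k) = sh (\<omega> k)"
  by (cases "\<omega> k") (simp add: Vstep_def flow_sh)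

lemma phi_Suc: "phi (Suc n) \<omega> = sh (\<omega> n) \<circ> phi n \<omega>"
  by (simp add: flow_Vstep)



lemma deriv_dir_lim:
  fixes g :: "real \<times> real \<Rightarrow> real \<times> real"
  assumes d: "(g has_derivative L) (at x)" and nj: "norm j = 1"
  shows "(\<lambda>m. real (Suc m) *\<^sub>R (g (x + (1 / real (Suc m)) *\<^sub>R j) - g x)) \<longlonglongrightarrow> L j"
proof (rule LIMSEQ_I)
  fix r :: real assume r: "0 < r"
  have bl: "bounded_linear L" using d by (simp add: has_derivative_at_alt)
  obtain \<delta> where \<delta>: "\<delta> > 0" "\<And>y. norm (y - x) < \<delta> \<Longrightarrow> norm (g y - g x - L (y - x)) \<le> (r/2) * norm (y - x)"
  proof -
    have H: "\<forall>e>0. \<exists>d>0. \<forall>y. norm (y - x) < d \<longrightarrow> norm (g y - g x - L (y - x)) \<le> e * norm (y - x)"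
      using d by (simp add: has_derivative_at_alt)
    have h2: "r/2 > 0" using r by simp
    have "\<exists>d>0. \<forall>y. norm (y - x) < d \<longrightarrow> norm (g y - g x - L (y - x)) \<le> (r/2) * norm (y - x)"
      using mp[OF spec[OF H, of "r/2"] h2] .
    then show ?thesis using that by blast
  qed
  obtain N where N: "1 / real (Suc N) < \<delta>"
    using reals_Archimedean[OF \<delta>(1)] by (auto simp: inverse_eq_divide)
  show "\<exists>N. \<forall>m\<ge>N. norm (real (Suc m) *\<^sub>R (g (x + (1 / real (Suc m)) *\<^sub>R j) - g x) - L j) < r"
  proof (intro exI allI impI)
    fix m assume m: "N \<le> m"
    define h where "h = 1 / real (Suc m)"
    have h0: "0 < h" by (simp add: h_def)
    have "h \<le> 1 / real (Suc N)" unfolding h_def using m by (simp add: frac_le)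
    then have hd: "h < \<delta>" using N by simp
    have ny: "norm ((x + h *\<^sub>R j) - x) = h" using nj h0 by simp
    have Lh: "L (h *\<^sub>R j) = h *\<^sub>R L j" using bl by (simp add: linear_simps)
    have b: "norm (g (x + h *\<^sub>R j) - g x - h *\<^sub>R L j) \<le> (r/2) * h"
      using \<delta>(2)[of "x + h *\<^sub>R j"] ny hd Lh by simp
    have eq: "real (Suc m) *\<^sub>R (g (x + h *\<^sub>R j) - g x) - L j
        = real (Suc m) *\<^sub>R (g (x + h *\<^sub>R j) - g x - h *\<^sub>R L j)"
      by (simp add: h_def algebra_simps)
    have "norm (real (Suc m) *\<^sub>R (g (x + h *\<^sub>R j) - g x - h *\<^sub>R L j))
         = real (Suc m) * norm (g (x + h *\<^sub>R j) - g x - h *\<^sub>R L j)" by simp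
    also have "\<dots> \<le> real (Suc m) * ((r/2) * h)"
      using b by (intro mult_left_mono) auto
    also have "\<dots> = r/2" by (simp add: h_def field_simps)
    also have "\<dots> < r" using r by simp
    finally show "norm (real (Suc m) *\<^sub>R (g (x + (1 / real (Suc m)) *\<^sub>R j) - g x) - L j) < r"
      using eq by (simp add: h_def)
  qed
qed

lemma deriv_char:
  fixes g :: "real \<times> real \<Rightarrow> real \<times> real"
  assumes bl: "bounded_linear L" and cg: "continuous_on UNIV g"
    and D: "\<And>X. open X \<Longrightarrow> X \<noteq> {} \<Longrightarrow> \<exists>d\<in>D. d \<in> X"
  shows "(g has_derivative L) (at x) \<longleftrightarrow>
    (\<forall>k::nat. \<exists>j::nat. \<forall>y\<in>D. norm (y - x) < 1 / real (Suc j) \<longrightarrow>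
        norm (g y - g x - L (y - x)) \<le> (1 / real (Suc k)) * norm (y - x))"
proof
  assume d: "(g has_derivative L) (at x)"
  show "\<forall>k::nat. \<exists>j::nat. \<forall>y\<in>D. norm (y - x) < 1 / real (Suc j) \<longrightarrow>
        norm (g y - g x - L (y - x)) \<le> (1 / real (Suc k)) * norm (y - x)"
  proof
    fix k :: nat
    obtain \<delta> where \<delta>: "\<delta> > 0" "\<And>y. norm (y - x) < \<delta> \<Longrightarrow> norm (g y - g x - L (y - x)) \<le> (1 / real (Suc k)) * norm (y - x)"
    proof -
      have H: "\<forall>e>0. \<exists>d>0. \<forall>y. norm (y - x) < d \<longrightarrow> norm (g y - g x - L (y - x)) \<le> e * norm (y - x)"
        using d by (simp add: has_derivative_at_alt)
      have h2: "1 / real (Suc k) > 0" by simp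
      have "\<exists>d>0. \<forall>y. norm (y - x) < d \<longrightarrow> norm (g y - g x - L (y - x)) \<le> (1 / real (Suc k)) * norm (y - x)"
        using mp[OF spec[OF H, of "1 / real (Suc k)"] h2] .
      then show ?thesis using that by blast
    qed
    obtain j where j: "1 / real (Suc j) < \<delta>"
      using reals_Archimedean[OF \<delta>(1)] by (auto simp: inverse_eq_divide)
    show "\<exists>j::nat. \<forall>y\<in>D. norm (y - x) < 1 / real (Suc j) \<longrightarrow>
        norm (g y - g x - L (y - x)) \<le> (1 / real (Suc k)) * norm (y - x)"
      using j \<delta> by (intro exI[of _ j]) auto
  qed
next
  assume H: "\<forall>k::nat. \<exists>j::nat. \<forall>y\<in>D. norm (y - x) < 1 / real (Suc j) \<longrightarrow>
        norm (g y - g x - L (y - x)) \<le> (1 / real (Suc k)) * norm (y - x)"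
  have cL: "continuous_on UNIV L" using bl linear_continuous_on by blast
  show "(g has_derivative L) (at x)"
    unfolding has_derivative_at_alt
  proof (intro conjI bl allI impI)
    fix e :: real assume e: "0 < e"
    obtain k where k: "1 / real (Suc k) < e"
      using reals_Archimedean[OF e] by (auto simp: inverse_eq_divide)
    obtain j where j: "\<forall>y\<in>D. norm (y - x) < 1 / real (Suc j) \<longrightarrow>
        norm (g y - g x - L (y - x)) \<le> (1 / real (Suc k)) * norm (y - x)"
      using H by blast
    show "\<exists>d>0. \<forall>y. norm (y - x) < d \<longrightarrow> norm (g y - g x - L (y - x)) \<le> e * norm (y - x)"
    proof (intro exI conjI allI impI)
      show "0 < 1 / real (Suc j)" by simp
      fix y assume y: "norm (y - x) < 1 / real (Suc j)"
      have "norm (g y - g x - L (y - x)) \<le> (1 / real (Suc k)) * norm (y - x)"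
      proof (rule ccontr)
        assume nc: "\<not> ?thesis"
        define Ob where "Ob = {z. norm (z - x) < 1 / real (Suc j)} \<inter>
                 {z. (1 / real (Suc k)) * norm (z - x) < norm (g z - g x - L (z - x))}"
        have "open Ob" unfolding Ob_def
          by (intro open_Int open_Collect_less continuous_intros cg cL
                 continuous_on_compose2[OF cL] continuous_on_compose2[OF cg]) auto
        moreover have "y \<in> Ob" using y nc by (auto simp: Ob_def)
        ultimately obtain z where "z \<in> D" "z \<in> Ob" using D by blast
        then show False using j by (auto simp: Ob_def)
      qed
      also have "\<dots> \<le> e * norm (y - x)" using k by (intro mult_right_mono) auto
      finally show "norm (g y - g x - L (y - x)) \<le> e * norm (y - x)" .
    qed
  qed
qed



lemma meas_hit_general:
  fixes f :: "'w \<Rightarrow> real \<times> real \<Rightarrow> real \<times> real"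
  assumes meas: "\<And>y. (\<lambda>\<omega>. f \<omega> y) \<in> borel_measurable M"
    and cont: "\<And>\<omega>. continuous_on UNIV (f \<omega>)"
    and S: "open S"
  shows "{\<omega>\<in>space M. \<exists>L. (f \<omega> has_derivative L) (at x) \<and> (f \<omega> x, L u) \<in> S} \<in> sets M"
proof -
  have "\<exists>D::(real \<times> real) set. countable D \<and> (\<forall>X. open X \<longrightarrow> X \<noteq> {} \<longrightarrow> (\<exists>d \<in> D. d \<in> X))"
    by (rule countable_dense_exists)
  then obtain D :: "(real \<times> real) set" where D: "countable D" "\<And>X. open X \<Longrightarrow> X \<noteq> {} \<Longrightarrow> \<exists>d\<in>D. d \<in> X"
    by blast
  have Dne: "D \<noteq> {}" using D(2)[of UNIV] by auto
  define yy where "yy = from_nat_into D"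
  have Dr: "D = range yy" unfolding yy_def using range_from_nat_into[OF Dne D(1)] by simp
  define q where "q j m \<omega> = real (Suc m) *\<^sub>R (f \<omega> (x + (1 / real (Suc m)) *\<^sub>R j) - f \<omega> x)"
    for j :: "real \<times> real" and m \<omega>
  define d where "d j \<omega> = lim (\<lambda>m. q j m \<omega>)" for j \<omega>
  define Lc where "Lc \<omega> h = fst h *\<^sub>R d (1,0) \<omega> + snd h *\<^sub>R d (0,1) \<omega>" for \<omega> and h :: "real \<times> real"
  have qm: "(\<lambda>\<omega>. q j m \<omega>) \<in> borel_measurable M" for j m
    unfolding q_def using meas by measurable
  have dm: "(\<lambda>\<omega>. d j \<omega>) \<in> borel_measurable M" for j
    unfolding d_def using qm by (rule borel_measurable_lim_metric)
  have Lcm: "(\<lambda>\<omega>. Lc \<omega> h) \<in> borel_measurable M" for h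
    unfolding Lc_def using dm by measurable
  have blc: "bounded_linear (Lc \<omega>)" for \<omega>
    unfolding Lc_def by (intro bounded_linear_add bounded_linear_compose[OF bounded_linear_scaleR_left] bounded_linear_fst bounded_linear_snd)
  have uniq: "L = Lc \<omega>" if h: "(f \<omega> has_derivative L) (at x)" for \<omega> L
  proof -
    have bl: "bounded_linear L" using h by (simp add: has_derivative_at_alt)
    have "d j \<omega> = L j" if "norm j = 1" for j
      unfolding d_def q_def using deriv_dir_lim[OF h that] by (rule limI)
    then have d1: "d (1,0) \<omega> = L (1,0)" and d2: "d (0,1) \<omega> = L (0,1)" by auto
    show ?thesis
    proof
      fix h :: "real \<times> real"
      have hh: "h = fst h *\<^sub>R (1,0) + snd h *\<^sub>R (0,1)" by (simp add: prod_eq_iff)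
      have ln: "linear L" using bl bounded_linear.linear by blast
      have "L (fst h *\<^sub>R (1,0) + snd h *\<^sub>R (0,1)) = fst h *\<^sub>R L (1,0) + snd h *\<^sub>R L (0,1)"
        by (simp only: linear_add[OF ln] linear_scale[OF ln])
      then have "L h = fst h *\<^sub>R L (1,0) + snd h *\<^sub>R L (0,1)" by (simp only: hh[symmetric])
      then show "L h = Lc \<omega> h" by (simp add: Lc_def d1 d2)
    qed
  qed
  define P where "P \<omega> \<longleftrightarrow> (\<forall>k::nat. \<exists>j::nat. \<forall>n::nat. norm (yy n - x) < 1 / real (Suc j) \<longrightarrow>
        norm (f \<omega> (yy n) - f \<omega> x - Lc \<omega> (yy n - x)) \<le> (1 / real (Suc k)) * norm (yy n - x))" for \<omega>
  have c: "(f \<omega> has_derivative Lc \<omega>) (at x) \<longleftrightarrow> P \<omega>" for \<omega>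
    unfolding P_def using deriv_char[OF blc[of \<omega>] cont[of \<omega>] D(2), of x] by (simp add: Dr)
  have eq: "{\<omega>\<in>space M. \<exists>L. (f \<omega> has_derivative L) (at x) \<and> (f \<omega> x, L u) \<in> S} =
    {\<omega>\<in>space M. P \<omega>} \<inter> {\<omega>\<in>space M. (f \<omega> x, Lc \<omega> u) \<in> S}"
  proof (intro set_eqI iffI)
    fix \<omega> assume "\<omega> \<in> {\<omega>\<in>space M. \<exists>L. (f \<omega> has_derivative L) (at x) \<and> (f \<omega> x, L u) \<in> S}"
    then obtain L where "\<omega> \<in> space M" "(f \<omega> has_derivative L) (at x)" "(f \<omega> x, L u) \<in> S" by blast
    moreover from this(2) have "L = Lc \<omega>" by (rule uniq)
    ultimately show "\<omega> \<in> {\<omega>\<in>space M. P \<omega>} \<inter> {\<omega>\<in>space M. (f \<omega> x, Lc \<omega> u) \<in> S}"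
      using c by simp
  next
    fix \<omega> assume "\<omega> \<in> {\<omega>\<in>space M. P \<omega>} \<inter> {\<omega>\<in>space M. (f \<omega> x, Lc \<omega> u) \<in> S}"
    then show "\<omega> \<in> {\<omega>\<in>space M. \<exists>L. (f \<omega> has_derivative L) (at x) \<and> (f \<omega> x, L u) \<in> S}"
      using c by auto
  qed
  have pm: "(\<lambda>\<omega>. (f \<omega> x, Lc \<omega> u)) \<in> borel_measurable M"
    using meas Lcm by (rule borel_measurable_Pair)
  have Sb: "S \<in> sets borel" using S by simp
  have s2: "{\<omega>\<in>space M. (f \<omega> x, Lc \<omega> u) \<in> S} \<in> sets M"
    using measurable_sets[OF pm Sb] by (simp add: vimage_def Int_def conj_commute)
  have fm: "(\<lambda>\<omega>. norm (f \<omega> (yy n) - f \<omega> x - Lc \<omega> (yy n - x))) \<in> borel_measurable M" for n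
  proof -
    have "(\<lambda>\<omega>. f \<omega> (yy n) - f \<omega> x - Lc \<omega> (yy n - x)) \<in> borel_measurable M"
      by (intro borel_measurable_diff meas Lcm)
    from measurable_compose[OF this borel_measurable_norm] show ?thesis by (simp add: o_def)
  qed
  have s1: "{\<omega>\<in>space M. P \<omega>} \<in> sets M"
    unfolding P_def
  proof (intro sets.sets_Collect_countable_All sets.sets_Collect_countable_Ex sets.sets_Collect_imp sets.sets_Collect_const)
    fix k j n
    show "{\<omega>\<in>space M. norm (f \<omega> (yy n) - f \<omega> x - Lc \<omega> (yy n - x)) \<le> (1 / real (Suc k)) * norm (yy n - x)} \<in> sets M"
      using fm[of n] by (simp add: borel_measurable_le)
  qed
  show ?thesis unfolding eq using s1 s2 by (rule sets.Int)
qed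



definition dF0 :: "real \<Rightarrow> real" where "dF0 t = (if frac t < 1/2 then 8 else -8)"
definition reg :: "real \<Rightarrow> bool" where
  "reg t \<longleftrightarrow> (3/8 < frac t \<and> frac t < 1/2) \<or> (1/2 < frac t \<and> frac t < 5/8)"

lemma F0_deriv_reg: "reg t \<Longrightarrow> (F0 has_real_derivative dF0 t) (at t)"
  unfolding reg_def dF0_def using F0_deriv_up F0_deriv_down by auto

definition region :: "real \<times> real \<times> nat \<Rightarrow> real \<times> real \<Rightarrow> bool" where
  "region p z = (case p of (\<alpha>, \<beta>, i) \<Rightarrow> if i = 1 then reg (snd z - \<alpha>) else reg (fst z - \<alpha>))"

definition Dsh :: "real \<times> real \<times> nat \<Rightarrow> real \<times> real \<Rightarrow> real \<times> real \<Rightarrow> real \<times> real" where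
  "Dsh p z v = (case p of (\<alpha>, \<beta>, i) \<Rightarrow>
     if i = 1 then (fst v + \<beta> * dF0 (snd z - \<alpha>) * snd v, snd v)
     else (fst v, snd v + \<beta> * dF0 (fst z - \<alpha>) * fst v))"

lemma sh_deriv:
  assumes "region p z" shows "(sh p has_derivative Dsh p z) (at z)"
proof -
  obtain \<alpha> \<beta> i where p: "p = (\<alpha>, \<beta>, i)" by (cases p) auto
  show ?thesis
  proof (cases "i = 1")
    case True
    have r: "reg (snd z - \<alpha>)" using assms True by (simp add: region_def p)
    have g: "((\<lambda>w. snd w - \<alpha>) has_derivative (\<lambda>h. snd h)) (at z)"
      by (auto intro!: derivative_eq_intros)
    have F': "(F0 has_derivative (*) (dF0 (snd z - \<alpha>))) (at ((\<lambda>w. snd w - \<alpha>) z))"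
      using F0_deriv_reg[OF r] by (simp add: has_field_derivative_def)
    have F0': "((\<lambda>w. F0 (snd w - \<alpha>)) has_derivative (\<lambda>h. dF0 (snd z - \<alpha>) * snd h)) (at z)"
      using diff_chain_at[OF g F'] by (simp only: o_def)
    have F: "((\<lambda>w. F0 (snd w - \<alpha>)) has_derivative (\<lambda>h. snd h * dF0 (snd z - \<alpha>))) (at z)"
      by (rule has_derivative_eq_rhs[OF F0']) (auto simp: fun_eq_iff)
    have "((\<lambda>w. (fst w + \<beta> * F0 (snd w - \<alpha>), snd w)) has_derivative
           (\<lambda>h. (fst h + \<beta> * (snd h * dF0 (snd z - \<alpha>)), snd h))) (at z)"
      by (intro derivative_eq_intros F) (use F in auto)
    moreover have "sh p = (\<lambda>w. (fst w + \<beta> * F0 (snd w - \<alpha>), snd w))"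
      by (rule ext) (simp add: sh_def p True)
    moreover have "Dsh p z = (\<lambda>h. (fst h + \<beta> * (snd h * dF0 (snd z - \<alpha>)), snd h))"
      by (rule ext) (simp add: Dsh_def p True algebra_simps)
    ultimately show ?thesis by simp
  next
    case False
    have r: "reg (fst z - \<alpha>)" using assms `i \<noteq> 1` by (simp add: region_def p)
    have g: "((\<lambda>w. fst w - \<alpha>) has_derivative (\<lambda>h. fst h)) (at z)"
      by (auto intro!: derivative_eq_intros)
    have F': "(F0 has_derivative (*) (dF0 (fst z - \<alpha>))) (at ((\<lambda>w. fst w - \<alpha>) z))"
      using F0_deriv_reg[OF r] by (simp add: has_field_derivative_def)
    have F0': "((\<lambda>w. F0 (fst w - \<alpha>)) has_derivative (\<lambda>h. dF0 (fst z - \<alpha>) * fst h)) (at z)"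
      using diff_chain_at[OF g F'] by (simp only: o_def)
    have F: "((\<lambda>w. F0 (fst w - \<alpha>)) has_derivative (\<lambda>h. fst h * dF0 (fst z - \<alpha>))) (at z)"
      by (rule has_derivative_eq_rhs[OF F0']) (auto simp: fun_eq_iff)
    have "((\<lambda>w. (fst w, snd w + \<beta> * F0 (fst w - \<alpha>))) has_derivative
           (\<lambda>h. (fst h, snd h + \<beta> * (fst h * dF0 (fst z - \<alpha>))))) (at z)"
      by (intro derivative_eq_intros F) (use F in auto)
    moreover have "sh p = (\<lambda>w. (fst w, snd w + \<beta> * F0 (fst w - \<alpha>)))"
      using `i \<noteq> 1` by (auto simp: sh_def p fun_eq_iff)
    moreover have "Dsh p z = (\<lambda>h. (fst h, snd h + \<beta> * (fst h * dF0 (fst z - \<alpha>))))"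
      using `i \<noteq> 1` by (auto simp: Dsh_def p fun_eq_iff algebra_simps)
    ultimately show ?thesis by simp
  qed
qed

definition T :: "real \<times> real \<times> nat \<Rightarrow> (real \<times> real) \<times> (real \<times> real) \<Rightarrow> (real \<times> real) \<times> (real \<times> real)" where
  "T p s = (sh p (fst s), Dsh p (fst s) (snd s))"

definition run where "run ps s = foldl (\<lambda>s p. T p s) s ps"

fun valid :: "(real \<times> real \<times> nat) list \<Rightarrow> (real \<times> real) \<times> (real \<times> real) \<Rightarrow> bool" where
  "valid [] s = True"
| "valid (p # ps) s = (region p (fst s) \<and> valid ps (T p s))"

lemma run_Nil[simp]: "run [] s = s" by (simp add: run_def)
lemma run_Cons[simp]: "run (p # ps) s = run ps (T p s)" by (simp add: run_def)
lemma run_snoc: "run (ps @ [p]) s = T p (run ps s)" by (simp add: run_def)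
lemma run_append: "run (ps @ qs) s = run qs (run ps s)" by (simp add: run_def)

lemma valid_snoc: "valid (ps @ [p]) s \<longleftrightarrow> valid ps s \<and> region p (fst (run ps s))"
  by (induction ps arbitrary: s) auto

lemma valid_append: "valid (ps @ qs) s \<longleftrightarrow> valid ps s \<and> valid qs (run ps s)"
  by (induction ps arbitrary: s) auto

lemma link:
  assumes "valid (map \<omega> [0..<n]) (x, u)"
  shows "\<exists>L. (phi n \<omega> has_derivative L) (at x) \<and> phi n \<omega> x = fst (run (map \<omega> [0..<n]) (x, u))
            \<and> L u = snd (run (map \<omega> [0..<n]) (x, u))"
  using assms
proof (induction n)
  case 0
  show ?case by (intro exI[of _ id]) (auto simp: id_def intro!: derivative_eq_intros)
next
  case (Suc n)
  have v: "valid (map \<omega> [0..<n]) (x, u)" and r: "region (\<omega> n) (fst (run (map \<omega> [0..<n]) (x, u)))"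
    using Suc.prems by (simp_all add: valid_snoc)
  obtain L where L: "(phi n \<omega> has_derivative L) (at x)" "phi n \<omega> x = fst (run (map \<omega> [0..<n]) (x, u))"
     "L u = snd (run (map \<omega> [0..<n]) (x, u))"
    using Suc.IH[OF v] by blast
  have d2: "(sh (\<omega> n) has_derivative Dsh (\<omega> n) (phi n \<omega> x)) (at (phi n \<omega> x))"
    using sh_deriv r L(2) by simp
  have "(phi (Suc n) \<omega> has_derivative (Dsh (\<omega> n) (phi n \<omega> x) \<circ> L)) (at x)"
    unfolding phi_Suc by (rule diff_chain_at[OF L(1) d2])
  then show ?case
    by (intro exI[of _ "Dsh (\<omega> n) (phi n \<omega> x) \<circ> L"]) (simp add: flow_Vstep run_snoc T_def L(2,3) o_def)
qed

lemma sh_cont: "continuous_on UNIV (sh p)"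
proof -
  obtain \<alpha> \<beta> i where p: "p = (\<alpha>, \<beta>, i)" by (cases p) auto
  show ?thesis unfolding p sh_def
    by (cases "i = 1") (auto intro!: continuous_intros continuous_on_compose2[OF F0_continuous_on])
qed

lemma phi_cont: "continuous_on UNIV (phi n \<omega>)"
proof (induction n)
  case 0 then show ?case by (simp add: continuous_on_id)
next
  case (Suc n)
  show ?case unfolding phi_Suc
    by (rule continuous_on_compose[OF Suc continuous_on_subset[OF sh_cont subset_UNIV]])
qed



lemma F0_meas[measurable]: "F0 \<in> borel_measurable borel"
  by (rule borel_measurable_continuous_onI[OF F0_continuous_on])

lemma comp_meas:
  "(\<lambda>\<omega>. fst (\<omega> n)) \<in> borel_measurable Mseq"
  "(\<lambda>\<omega>. fst (snd (\<omega> n))) \<in> borel_measurable Mseq"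
  "{\<omega> \<in> space Mseq. snd (snd (\<omega> n)) = 1} \<in> sets Mseq"
  unfolding Mseq_def M1_def by measurable

lemma phi_meas: "(\<lambda>\<omega>. phi n \<omega> y) \<in> borel_measurable Mseq"
proof (induction n)
  case 0 then show ?case by simp
next
  case (Suc n)
  have e: "phi (Suc n) \<omega> y = (if snd (snd (\<omega> n)) = 1
     then (fst (phi n \<omega> y) + fst (snd (\<omega> n)) * F0 (snd (phi n \<omega> y) - fst (\<omega> n)), snd (phi n \<omega> y))
     else (fst (phi n \<omega> y), snd (phi n \<omega> y) + fst (snd (\<omega> n)) * F0 (fst (phi n \<omega> y) - fst (\<omega> n))))" for \<omega>
    by (simp add: flow_Vstep sh_def split: prod.splits)
  have cf: "fst \<in> borel_measurable (borel :: (real \<times> real) measure)"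
    by (rule borel_measurable_continuous_onI) (intro continuous_intros)
  have cs: "snd \<in> borel_measurable (borel :: (real \<times> real) measure)"
    by (rule borel_measurable_continuous_onI) (intro continuous_intros)
  have f1[measurable]: "(\<lambda>\<omega>. fst (phi n \<omega> y)) \<in> borel_measurable Mseq"
    using measurable_compose[OF Suc cf] by (simp add: o_def)
  have f2[measurable]: "(\<lambda>\<omega>. snd (phi n \<omega> y)) \<in> borel_measurable Mseq"
    using measurable_compose[OF Suc cs] by (simp add: o_def)
  note [measurable] = comp_meas
  have b1: "(\<lambda>\<omega>. (fst (phi n \<omega> y) + fst (snd (\<omega> n)) * F0 (snd (phi n \<omega> y) - fst (\<omega> n)), snd (phi n \<omega> y))) \<in> borel_measurable Mseq"
    by (intro borel_measurable_Pair) measurable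
  have b2: "(\<lambda>\<omega>. (fst (phi n \<omega> y), snd (phi n \<omega> y) + fst (snd (\<omega> n)) * F0 (fst (phi n \<omega> y) - fst (\<omega> n)))) \<in> borel_measurable Mseq"
    by (intro borel_measurable_Pair) measurable
  have A: "{\<omega>\<in>space Mseq. snd (snd (\<omega> n)) = 1} \<inter> space Mseq \<in> sets Mseq"
    using comp_meas(3)[of n] by (simp add: Int_absorb2)
  have m: "(\<lambda>\<omega>. if \<omega> \<in> {\<omega>\<in>space Mseq. snd (snd (\<omega> n)) = 1}
     then (fst (phi n \<omega> y) + fst (snd (\<omega> n)) * F0 (snd (phi n \<omega> y) - fst (\<omega> n)), snd (phi n \<omega> y))
     else (fst (phi n \<omega> y), snd (phi n \<omega> y) + fst (snd (\<omega> n)) * F0 (fst (phi n \<omega> y) - fst (\<omega> n))))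
     \<in> borel_measurable Mseq"
    by (rule measurable_If_set[OF b1 b2 A])
  show ?case unfolding e
    by (rule measurable_cong[THEN iffD1, OF _ m]) simp
qed

lemma hit_meas:
  assumes "open S"
  shows "hit_event n x u S \<in> sets Mseq"
  unfolding hit_event_def
  by (rule meas_hit_general[OF phi_meas phi_cont assms])



lemma dist_pair_le: "dist (a, b) (c, d) \<le> dist a c + dist b d"
  using sqrt_sum_squares_le_sum_abs[of "dist a c" "dist b d"] by (simp add: dist_Pair_Pair)

lemma robust_from_cont:
  fixes \<Phi> :: "(real \<times> real) \<times> ((real \<times> real) \<times> (real \<times> real)) \<Rightarrow> (real \<times> real) \<times> (real \<times> real)"
    and g :: "(real \<times> real) \<times> ((real \<times> real) \<times> (real \<times> real)) \<Rightarrow> real"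
  assumes c\<Phi>: "continuous_on UNIV \<Phi>" and cg: "continuous_on UNIV g" and Oo: "open Oo" and U: "open U"
    and in1: "g (q0, s0) \<in> Oo" and in2: "\<Phi> (q0, s0) \<in> U"
    and agree: "\<And>q s. g (q, s) \<in> Oo \<Longrightarrow> P q s \<and> Tq q s = \<Phi> (q, s)"
  shows "\<exists>\<rho>>0. \<exists>e>0. \<forall>q s. dist q q0 < \<rho> \<longrightarrow> dist s s0 < e \<longrightarrow> P q s \<and> Tq q s \<in> U"
proof -
  define W where "W = (g -` Oo \<inter> UNIV) \<inter> (\<Phi> -` U \<inter> UNIV)"
  have o1: "open (g -` Oo \<inter> UNIV)" using continuous_on_open_vimage[of UNIV g] cg Oo by simp
  have o2: "open (\<Phi> -` U \<inter> UNIV)" using continuous_on_open_vimage[of UNIV \<Phi>] c\<Phi> U by simp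
  have "open W" unfolding W_def using o1 o2 by (rule open_Int)
  moreover have "(q0, s0) \<in> W" using in1 in2 by (simp add: W_def)
  ultimately obtain \<epsilon> where \<epsilon>: "\<epsilon> > 0" "ball (q0, s0) \<epsilon> \<subseteq> W" by (meson openE)
  have h0: "\<epsilon>/2 > 0" using \<epsilon> by auto
  have "\<forall>q s. dist q q0 < \<epsilon>/2 \<longrightarrow> dist s s0 < \<epsilon>/2 \<longrightarrow> P q s \<and> Tq q s \<in> U"
  proof (intro allI impI)
    fix q s assume q: "dist q q0 < \<epsilon>/2" and s: "dist s s0 < \<epsilon>/2"
    have "dist (q, s) (q0, s0) < \<epsilon>" using dist_pair_le[of q s q0 s0] q s by simp
    then have "(q, s) \<in> W" using \<epsilon> by (auto simp: dist_commute)
    then show "P q s \<and> Tq q s \<in> U" using agree by (auto simp: W_def)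
  qed
  then show ?thesis using h0 by blast
qed

lemma reg_cases: "reg t \<Longrightarrow> (3/8 < frac t \<and> frac t < 1/2 \<and> dF0 t = 8) \<or> (1/2 < frac t \<and> frac t < 5/8 \<and> dF0 t = -8)"
  by (auto simp: reg_def dF0_def)

lemma reg_O:
  assumes "reg t0"
  obtains Oo c where "open Oo" "t0 \<in> Oo" "\<And>t. t \<in> Oo \<Longrightarrow> reg t \<and> dF0 t = c"
proof -
  from reg_cases[OF assms] show ?thesis
  proof
    assume h: "3/8 < frac t0 \<and> frac t0 < 1/2 \<and> dF0 t0 = 8"
    show ?thesis
      by (rule that[of "{t. 3/8 < frac t \<and> frac t < 1/2}" 8])
         (use h open_frac_interval[of "3/8" "1/2"] in \<open>auto simp: reg_def dF0_def\<close>)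
  next
    assume h: "1/2 < frac t0 \<and> frac t0 < 5/8 \<and> dF0 t0 = -8"
    show ?thesis
      by (rule that[of "{t. 1/2 < frac t \<and> frac t < 5/8}" "-8"])
         (use h open_frac_interval[of "1/2" "5/8"] in \<open>auto simp: reg_def dF0_def\<close>)
  qed
qed

lemma step_robust:
  assumes r: "region (\<alpha>0, \<beta>0, i) (fst s0)" and U: "open U" and TU: "T (\<alpha>0, \<beta>0, i) s0 \<in> U"
  shows "\<exists>\<rho>>0. \<exists>e>0. \<forall>q s. dist q (\<alpha>0, \<beta>0) < \<rho> \<longrightarrow> dist s s0 < e \<longrightarrow>
      region (fst q, snd q, i) (fst s) \<and> T (fst q, snd q, i) s \<in> U"
proof (cases "i = 1")
  case True
  have rr: "reg (snd (fst s0) - \<alpha>0)" using r True by (simp add: region_def)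
  obtain Oo c where Oo: "open Oo" "snd (fst s0) - \<alpha>0 \<in> Oo" "\<And>t. t \<in> Oo \<Longrightarrow> reg t \<and> dF0 t = c"
    using reg_O[OF rr] by metis
  define \<Phi> where "\<Phi> x = (case x of (q, s) \<Rightarrow>
     ((fst (fst s) + snd q * F0 (snd (fst s) - fst q), snd (fst s)),
      (fst (snd s) + snd q * c * snd (snd s), snd (snd s))))"
    for x :: "(real \<times> real) \<times> ((real \<times> real) \<times> (real \<times> real))"
  define g where "g x = (case x of (q, s) \<Rightarrow> snd (fst s) - fst q)"
    for x :: "(real \<times> real) \<times> ((real \<times> real) \<times> (real \<times> real))"
  have c\<Phi>: "continuous_on UNIV \<Phi>"
    unfolding \<Phi>_def case_prod_beta
    by (intro continuous_intros continuous_on_compose2[OF F0_continuous_on]) auto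
  have cg: "continuous_on UNIV g" unfolding g_def case_prod_beta by (intro continuous_intros)
  have agree: "region (fst q, snd q, i) (fst s) \<and> T (fst q, snd q, i) s = \<Phi> (q, s)"
    if "g (q, s) \<in> Oo" for q s
    using Oo(3)[OF that[unfolded g_def, simplified]] True
    by (simp add: region_def T_def sh_def Dsh_def \<Phi>_def algebra_simps)
  have in1: "g ((\<alpha>0, \<beta>0), s0) \<in> Oo" using Oo(2) by (simp add: g_def)
  have in2: "\<Phi> ((\<alpha>0, \<beta>0), s0) \<in> U" using agree[OF in1] TU by simp
  show ?thesis
    using robust_from_cont[OF c\<Phi> cg Oo(1) U in1 in2, of "\<lambda>q s. region (fst q, snd q, i) (fst s)"
        "\<lambda>q s. T (fst q, snd q, i) s"] agree by blast
next
  case False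
  have rr: "reg (fst (fst s0) - \<alpha>0)" using r False by (simp add: region_def)
  obtain Oo c where Oo: "open Oo" "fst (fst s0) - \<alpha>0 \<in> Oo" "\<And>t. t \<in> Oo \<Longrightarrow> reg t \<and> dF0 t = c"
    using reg_O[OF rr] by metis
  define \<Phi> where "\<Phi> x = (case x of (q, s) \<Rightarrow>
     ((fst (fst s), snd (fst s) + snd q * F0 (fst (fst s) - fst q)),
      (fst (snd s), snd (snd s) + snd q * c * fst (snd s))))"
    for x :: "(real \<times> real) \<times> ((real \<times> real) \<times> (real \<times> real))"
  define g where "g x = (case x of (q, s) \<Rightarrow> fst (fst s) - fst q)"
    for x :: "(real \<times> real) \<times> ((real \<times> real) \<times> (real \<times> real))"
  have c\<Phi>: "continuous_on UNIV \<Phi>"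
    unfolding \<Phi>_def case_prod_beta
    by (intro continuous_intros continuous_on_compose2[OF F0_continuous_on]) auto
  have cg: "continuous_on UNIV g" unfolding g_def case_prod_beta by (intro continuous_intros)
  have agree: "region (fst q, snd q, i) (fst s) \<and> T (fst q, snd q, i) s = \<Phi> (q, s)"
    if "g (q, s) \<in> Oo" for q s
    using Oo(3)[OF that[unfolded g_def, simplified]] False
    by (simp add: region_def T_def sh_def Dsh_def \<Phi>_def algebra_simps)
  have in1: "g ((\<alpha>0, \<beta>0), s0) \<in> Oo" using Oo(2) by (simp add: g_def)
  have in2: "\<Phi> ((\<alpha>0, \<beta>0), s0) \<in> U" using agree[OF in1] TU by simp
  show ?thesis
    using robust_from_cont[OF c\<Phi> cg Oo(1) U in1 in2, of "\<lambda>q s. region (fst q, snd q, i) (fst s)"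
        "\<lambda>q s. T (fst q, snd q, i) s"] agree by blast
qed

definition close :: "real \<Rightarrow> real \<times> real \<times> nat \<Rightarrow> real \<times> real \<times> nat \<Rightarrow> bool" where
  "close \<rho> q p \<longleftrightarrow> snd (snd q) = snd (snd p) \<and> dist (fst q, fst (snd q)) (fst p, fst (snd p)) < \<rho>"

lemma chain_robust:
  assumes "valid ps s0" "open U" "run ps s0 \<in> U"
  shows "\<exists>\<rho>>0. \<exists>e>0. \<forall>qs s. list_all2 (close \<rho>) qs ps \<longrightarrow> dist s s0 < e \<longrightarrow> valid qs s \<and> run qs s \<in> U"
  using assms
proof (induction ps arbitrary: s0)
  case Nil
  obtain e where "e > 0" "ball s0 e \<subseteq> U" using openE[OF Nil.prems(2), of s0] Nil.prems(3) by auto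
  then have "\<forall>qs s. list_all2 (close 1) qs [] \<longrightarrow> dist s s0 < e \<longrightarrow> valid qs s \<and> run qs s \<in> U"
    by (auto simp: dist_commute subset_eq)
  then show ?case using \<open>e > 0\<close> by (metis zero_less_one)
next
  case (Cons p ps)
  obtain \<alpha>0 \<beta>0 i where p: "p = (\<alpha>0, \<beta>0, i)" by (cases p) auto
  have r: "region p (fst s0)" and v: "valid ps (T p s0)" using Cons.prems by auto
  obtain \<rho>1 e1 where h1: "\<rho>1 > 0" "e1 > 0"
    "\<forall>qs s. list_all2 (close \<rho>1) qs ps \<longrightarrow> dist s (T p s0) < e1 \<longrightarrow> valid qs s \<and> run qs s \<in> U"
    using Cons.IH[OF v Cons.prems(2)] Cons.prems(3) by auto
  have "T (\<alpha>0, \<beta>0, i) s0 \<in> ball (T p s0) e1" using h1 p by simp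
  from step_robust[OF r[unfolded p] open_ball this] obtain \<rho>2 e2 where h2: "\<rho>2 > 0" "e2 > 0"
    "\<forall>q s. dist q (\<alpha>0, \<beta>0) < \<rho>2 \<longrightarrow> dist s s0 < e2 \<longrightarrow>
      region (fst q, snd q, i) (fst s) \<and> T (fst q, snd q, i) s \<in> ball (T p s0) e1" by blast
  have "\<forall>qs s. list_all2 (close (min \<rho>1 \<rho>2)) qs (p # ps) \<longrightarrow> dist s s0 < e2 \<longrightarrow> valid qs s \<and> run qs s \<in> U"
  proof (intro allI impI)
    fix qs s assume l: "list_all2 (close (min \<rho>1 \<rho>2)) qs (p # ps)" and s: "dist s s0 < e2"
    then obtain q qs' where qs: "qs = q # qs'" and cq: "close (min \<rho>1 \<rho>2) q p"
      and l': "list_all2 (close (min \<rho>1 \<rho>2)) qs' ps"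
      by (cases qs) auto
    obtain a b j where q: "q = (a, b, j)" by (cases q) auto
    have j: "j = i" and dq: "dist (a, b) (\<alpha>0, \<beta>0) < \<rho>2"
      using cq by (auto simp: close_def q p)
    have st: "region q (fst s) \<and> T q s \<in> ball (T p s0) e1"
      using h2(3)[rule_format, of "(a, b)" s] dq s by (simp add: q j)
    have l1: "list_all2 (close \<rho>1) qs' ps"
      using l' by (rule list_all2_mono) (auto simp: close_def)
    have dd: "dist (T q s) (T p s0) < e1" using st by (simp add: dist_commute)
    have "valid qs' (T q s) \<and> run qs' (T q s) \<in> U"
      using h1(3)[rule_format, OF l1 dd] .
    then show "valid qs s \<and> run qs s \<in> U" using st qs by simp
  qed
  moreover have "min \<rho>1 \<rho>2 > 0" using h1 h2 by auto
  ultimately show ?case using h2(2) by blast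
qed



abbreviation "U01 \<equiv> uniform_measure lborel {0..1::real}"
abbreviation "C12 \<equiv> uniform_count_measure {1, 2::nat}"

lemma U01_prob: "prob_space U01"
  by (rule prob_space_uniform_measure) auto

lemma C12_prob: "prob_space C12"
  by (rule prob_space_uniform_count_measure) auto

lemma UC_prob: "prob_space (U01 \<Otimes>\<^sub>M C12)"
  by (rule prob_space_pair[OF U01_prob C12_prob])

lemma M1_prob: "prob_space M1"
  unfolding M1_def by (rule prob_space_pair[OF U01_prob UC_prob])

lemma U01_pos:
  fixes c r :: real
  assumes c: "0 \<le> c" "c \<le> 1" and r: "r > 0"
  shows "emeasure U01 {c - r <..< c + r} > 0"
proof -
  obtain a' b' where ab: "a' < b'" "{a' <..< b'} \<subseteq> {0..1} \<inter> {c - r <..< c + r}"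
  proof (cases "c \<le> 1/2")
    case True
    show ?thesis by (rule that[of c "min (c + r/2) 1"]) (use True c r in auto)
  next
    case False
    show ?thesis by (rule that[of "max (c - r/2) 0" c]) (use False c r in auto)
  qed
  have "0 < emeasure lborel {a' <..< b'}" using ab(1) by simp
  also have "\<dots> \<le> emeasure lborel ({0..1} \<inter> {c - r <..< c + r})"
    by (rule emeasure_mono[OF ab(2)]) auto
  finally have "0 < emeasure lborel ({0..1} \<inter> {c - r <..< c + r})" .
  then show ?thesis by (simp add: divide_ennreal_def)
qed

lemma box_sets:
  fixes a b r :: real
  assumes "i \<in> {1,2}"
  shows "{a - r <..< a + r} \<times> ({b - r <..< b + r} \<times> {i}) \<in> sets M1"
  unfolding M1_def using assms by (intro pair_measureI) (auto simp: sets_uniform_count_measure)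

lemma box_pos:
  fixes a b r :: real
  assumes "0 \<le> a" "a \<le> 1" "0 \<le> b" "b \<le> 1" "i \<in> {1,2}" "r > 0"
  shows "emeasure M1 ({a - r <..< a + r} \<times> ({b - r <..< b + r} \<times> {i})) > 0"
proof -
  interpret C: prob_space C12 by (rule C12_prob)
  interpret UC: prob_space "U01 \<Otimes>\<^sub>M C12" by (rule UC_prob)
  have s1: "{b - r <..< b + r} \<times> {i} \<in> sets (U01 \<Otimes>\<^sub>M C12)"
    using assms by (intro pair_measureI) (auto simp: sets_uniform_count_measure)
  have e1: "emeasure (U01 \<Otimes>\<^sub>M C12) ({b - r <..< b + r} \<times> {i}) = emeasure U01 {b - r <..< b + r} * emeasure C12 {i}"
    by (rule C.emeasure_pair_measure_Times) (use assms in \<open>auto simp: sets_uniform_count_measure\<close>)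
  have e2: "emeasure M1 ({a - r <..< a + r} \<times> ({b - r <..< b + r} \<times> {i})) =
     emeasure U01 {a - r <..< a + r} * emeasure (U01 \<Otimes>\<^sub>M C12) ({b - r <..< b + r} \<times> {i})"
    unfolding M1_def by (rule UC.emeasure_pair_measure_Times) (use s1 in auto)
  have c: "emeasure C12 {i} > 0"
    using assms by (subst emeasure_uniform_count_measure) (auto simp: ennreal_inverse_positive)
  show ?thesis unfolding e2 e1 using U01_pos c assms
    by (simp add: ennreal_zero_less_mult_iff)
qed

lemma prod_ennreal_pos: "finite J \<Longrightarrow> (\<And>j. j \<in> J \<Longrightarrow> f j > (0::ennreal)) \<Longrightarrow> (\<Prod>j\<in>J. f j) > 0"
  by (induction J rule: finite_induct) (auto simp: ennreal_zero_less_mult_iff)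

lemma positive_event:
  assumes ps: "\<forall>p\<in>set ps. 0 \<le> fst p \<and> fst p \<le> 1 \<and> 0 \<le> fst (snd p) \<and> fst (snd p) \<le> 1 \<and> snd (snd p) \<in> {1,2}"
    and v: "valid ps (x, u)" and S: "open S" and rS: "run ps (x, u) \<in> S"
  shows "measure Mseq (hit_event (length ps) x u S) > 0"
proof -
  obtain \<rho> e where \<rho>: "\<rho> > 0" "e > 0"
    "\<forall>qs s. list_all2 (close \<rho>) qs ps \<longrightarrow> dist s (x, u) < e \<longrightarrow> valid qs s \<and> run qs s \<in> S"
    using chain_robust[OF v S rS] by blast
  define n where "n = length ps"
  define r where "r = \<rho>/2"
  define B where "B k = {fst (ps!k) - r <..< fst (ps!k) + r} \<times> ({fst (snd (ps!k)) - r <..< fst (snd (ps!k)) + r} \<times> {snd (snd (ps!k))})" for k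
  define Cy where "Cy = prod_emb UNIV (\<lambda>_. M1) {..<n} (Pi\<^sub>E {..<n} B)"
  interpret M1p: prob_space M1 by (rule M1_prob)
  interpret P: product_prob_space "\<lambda>_::nat. M1" UNIV
    by (rule product_prob_spaceI) (rule M1_prob)
  have psk: "0 \<le> fst (ps!k) \<and> fst (ps!k) \<le> 1 \<and> 0 \<le> fst (snd (ps!k)) \<and> fst (snd (ps!k)) \<le> 1 \<and> snd (snd (ps!k)) \<in> {1,2}"
    if "k < n" for k
  proof -
    have "ps!k \<in> set ps" using that n_def by simp
    from ps[rule_format, OF this] show ?thesis .
  qed
  have Bs: "B k \<in> sets M1" if "k < n" for k
    unfolding B_def using psk[OF that] by (intro box_sets) auto
  have Bp: "emeasure M1 (B k) > 0" if "k < n" for k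
    unfolding B_def using psk[OF that] \<rho> r_def by (intro box_pos) auto
  have eC: "emeasure Mseq Cy = (\<Prod>k\<in>{..<n}. emeasure M1 (B k))"
    unfolding Mseq_def Cy_def by (rule P.emeasure_PiM_emb) (auto intro: Bs)
  have Cpos: "emeasure Mseq Cy > 0" unfolding eC by (rule prod_ennreal_pos) (auto intro: Bp)
  have Csets: "Cy \<in> sets Mseq" unfolding Mseq_def Cy_def
    by (rule sets_PiM_I) (auto intro: Bs)
  have sub: "Cy \<subseteq> hit_event n x u S"
  proof
    fix \<omega> assume w: "\<omega> \<in> Cy"
    then have ws: "\<omega> \<in> space Mseq" and wk: "\<And>k. k < n \<Longrightarrow> \<omega> k \<in> B k"
      by (auto simp: Cy_def prod_emb_def Mseq_def space_PiM)
    have "list_all2 (close \<rho>) (map \<omega> [0..<n]) ps"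
    proof (rule list_all2_all_nthI)
      show "length (map \<omega> [0..<n]) = length ps" by (simp add: n_def)
      fix k assume k: "k < length (map \<omega> [0..<n])"
      then have k': "k < n" by simp
      obtain a b i where wa: "\<omega> k = (a, b, i)" by (cases "\<omega> k") auto
      have h: "\<bar>a - fst (ps!k)\<bar> < r" "\<bar>b - fst (snd (ps!k))\<bar> < r" "i = snd (snd (ps!k))"
        using wk[OF k'] by (auto simp: B_def wa abs_less_iff)
      have "dist (a, b) (fst (ps!k), fst (snd (ps!k))) \<le> dist a (fst (ps!k)) + dist b (fst (snd (ps!k)))"
        by (rule dist_pair_le)
      also have "\<dots> < \<rho>" using h by (simp add: dist_real_def r_def)
      finally show "close \<rho> (map \<omega> [0..<n] ! k) (ps ! k)"
        using k' h(3) by (simp add: close_def wa)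
    qed
    moreover have "dist (x, u) (x, u) < e" using \<rho>(2) by simp
    ultimately have "valid (map \<omega> [0..<n]) (x, u) \<and> run (map \<omega> [0..<n]) (x, u) \<in> S"
      using \<rho>(3)[rule_format] by blast
    then obtain L where "(phi n \<omega> has_derivative L) (at x)" "phi n \<omega> x = fst (run (map \<omega> [0..<n]) (x, u))"
            "L u = snd (run (map \<omega> [0..<n]) (x, u))"
      using link by blast
    then show "\<omega> \<in> hit_event n x u S"
      unfolding hit_event_def using ws \<open>valid (map \<omega> [0..<n]) (x, u) \<and> run (map \<omega> [0..<n]) (x, u) \<in> S\<close>
      by (auto intro!: exI[of _ L])
  qed
  interpret PM: prob_space Mseq unfolding Mseq_def by (rule prob_space_PiM) (rule M1_prob)
  have "0 < measure Mseq Cy" using Cpos PM.emeasure_eq_measure by (simp add: PM.emeasure_eq_measure)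
  also have "\<dots> \<le> measure Mseq (hit_event n x u S)"
    by (rule PM.finite_measure_mono[OF sub hit_meas[OF S]])
  finally show ?thesis by (simp add: n_def)
qed



definition good :: "real \<times> real \<times> nat \<Rightarrow> bool" where
  "good p \<longleftrightarrow> 0 \<le> fst p \<and> fst p \<le> 1 \<and> 0 \<le> fst (snd p) \<and> fst (snd p) \<le> 1 \<and> snd (snd p) \<in> {1,2}"

definition reach where
  "reach s s' \<longleftrightarrow> (\<exists>ps. (\<forall>p\<in>set ps. good p) \<and> valid ps s \<and> run ps s = s')"

lemma reach_refl: "reach s s"
  unfolding reach_def by (intro exI[of _ "[]"]) simp

lemma reach_trans: "reach s1 s2 \<Longrightarrow> reach s2 s3 \<Longrightarrow> reach s1 s3"
  unfolding reach_def
proof (elim exE conjE)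
  fix ps qs assume "\<forall>p\<in>set ps. good p" "valid ps s1" "run ps s1 = s2"
    "\<forall>p\<in>set qs. good p" "valid qs s2" "run qs s2 = s3"
  then show "\<exists>ps. (\<forall>p\<in>set ps. good p) \<and> valid ps s1 \<and> run ps s1 = s3"
    by (intro exI[of _ "ps @ qs"]) (auto simp: valid_append run_append)
qed

lemma frac_shift: "frac (b - frac (b - t)) = frac t"
proof -
  have "b - frac (b - t) = t + of_int (floor (b - t))" by (simp add: frac_def)
  then show ?thesis by simp
qed

lemma reg_frac: "frac x = frac y \<Longrightarrow> reg x = reg y" by (simp add: reg_def)
lemma dF0_frac: "frac x = frac y \<Longrightarrow> dF0 x = dF0 y" by (simp add: dF0_def)
lemma F0_frac: "frac x = frac y \<Longrightarrow> F0 x = F0 y" by (simp add: F0_def)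

lemma frac_in01: "0 \<le> frac x \<and> frac x \<le> (1::real)"
  using frac_lt_1[of x] frac_ge_0[of x] by simp

lemma hgen:
  assumes "0 \<le> \<beta>" "\<beta> \<le> 1" "reg t"
  shows "reach ((a, b), v) ((a + \<beta> * F0 t, b), (fst v + \<beta> * dF0 t * snd v, snd v))"
proof -
  define \<alpha> where "\<alpha> = frac (b - t)"
  have fr: "frac (b - \<alpha>) = frac t" unfolding \<alpha>_def by (rule frac_shift)
  show ?thesis unfolding reach_def
    apply (intro exI[of _ "[(\<alpha>, \<beta>, 1)]"])
    using assms frac_in01[of "b - t"] reg_frac[OF fr] dF0_frac[OF fr] F0_frac[OF fr]
    by (auto simp: good_def \<alpha>_def[symmetric] region_def T_def sh_def Dsh_def)
qed

lemma vgen: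
  assumes "0 \<le> \<beta>" "\<beta> \<le> 1" "reg t"
  shows "reach ((a, b), v) ((a, b + \<beta> * F0 t), (fst v, snd v + \<beta> * dF0 t * fst v))"
proof -
  define \<alpha> where "\<alpha> = frac (a - t)"
  have fr: "frac (a - \<alpha>) = frac t" unfolding \<alpha>_def by (rule frac_shift)
  show ?thesis unfolding reach_def
    apply (intro exI[of _ "[(\<alpha>, \<beta>, 2)]"])
    using assms frac_in01[of "a - t"] reg_frac[OF fr] dF0_frac[OF fr] F0_frac[OF fr]
    by (auto simp: good_def \<alpha>_def[symmetric] region_def T_def sh_def Dsh_def)
qed

lemma vals:
  "reg (7/16)" "dF0 (7/16) = 8" "reg (9/16)" "dF0 (9/16) = -8"
  "reg (15/32)" "dF0 (15/32) = 8" "F0 (15/32) = 3/4"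
  "reg (17/32)" "dF0 (17/32) = -8" "F0 (17/32) = 3/4"
  by (simp_all add: reg_def dF0_def F0_def frac_eq)

lemma hslope:
  assumes "\<bar>\<sigma>\<bar> \<le> 8"
  shows "\<exists>d. reach ((a, b), v) ((a + d, b), (fst v + \<sigma> * snd v, snd v))"
proof (cases "\<sigma> \<ge> 0")
  case True
  have "reach ((a, b), v) ((a + (\<sigma>/8) * F0 (7/16), b), (fst v + \<sigma> * snd v, snd v))"
    using hgen[of "\<sigma>/8" "7/16" a b v] True assms vals by simp
  then show ?thesis by blast
next
  case False
  have "reach ((a, b), v) ((a + (-\<sigma>/8) * F0 (9/16), b), (fst v + \<sigma> * snd v, snd v))"
    using hgen[of "-\<sigma>/8" "9/16" a b v] False assms vals by simp
  then show ?thesis by blast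
qed

lemma vslope:
  assumes "\<bar>\<sigma>\<bar> \<le> 8"
  shows "\<exists>d. reach ((a, b), v) ((a, b + d), (fst v, snd v + \<sigma> * fst v))"
proof (cases "\<sigma> \<ge> 0")
  case True
  have "reach ((a, b), v) ((a, b + (\<sigma>/8) * F0 (7/16)), (fst v, snd v + \<sigma> * fst v))"
    using vgen[of "\<sigma>/8" "7/16" a b v] True assms vals by simp
  then show ?thesis by blast
next
  case False
  have "reach ((a, b), v) ((a, b + (-\<sigma>/8) * F0 (9/16)), (fst v, snd v + \<sigma> * fst v))"
    using vgen[of "-\<sigma>/8" "9/16" a b v] False assms vals by simp
  then show ?thesis by blast
qed

lemma htrans: "\<exists>k::int. reach ((a, b), v) ((y1 - of_int k, b), v)"
proof -
  define \<delta> where "\<delta> = frac (y1 - a)"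
  have d: "0 \<le> \<delta>" "\<delta> \<le> 1" using frac_in01 \<delta>_def by auto
  define \<beta> where "\<beta> = 2 * \<delta> / 3"
  have b: "0 \<le> \<beta>" "\<beta> \<le> 1" using d by (auto simp: \<beta>_def)
  have r1: "reach ((a, b), v) ((a + \<beta> * (3/4), b), (fst v + \<beta> * 8 * snd v, snd v))"
    using hgen[OF b vals(5), of a b v] vals by simp
  have r2: "reach ((a + \<beta> * (3/4), b), (fst v + \<beta> * 8 * snd v, snd v))
      ((a + \<beta> * (3/4) + \<beta> * (3/4), b), (fst v + \<beta> * 8 * snd v + \<beta> * (-8) * snd v, snd v))"
    using hgen[OF b vals(8), of "a + \<beta> * (3/4)" b "(fst v + \<beta> * 8 * snd v, snd v)"] vals by simp
  have e: "a + \<beta> * (3/4) + \<beta> * (3/4) = y1 - of_int (floor (y1 - a))"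
    by (simp add: \<beta>_def \<delta>_def frac_def field_simps)
  have "reach ((a, b), v) ((y1 - of_int (floor (y1 - a)), b), v)"
    using reach_trans[OF r1 r2] e by (simp add: prod_eq_iff)
  then show ?thesis by blast
qed

lemma vtrans: "\<exists>k::int. reach ((a, b), v) ((a, y2 - of_int k), v)"
proof -
  define \<delta> where "\<delta> = frac (y2 - b)"
  have d: "0 \<le> \<delta>" "\<delta> \<le> 1" using frac_in01 \<delta>_def by auto
  define \<beta> where "\<beta> = 2 * \<delta> / 3"
  have b: "0 \<le> \<beta>" "\<beta> \<le> 1" using d by (auto simp: \<beta>_def)
  have r1: "reach ((a, b), v) ((a, b + \<beta> * (3/4)), (fst v, snd v + \<beta> * 8 * fst v))"
    using vgen[OF b vals(5), of a b v] vals by simp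
  have r2: "reach ((a, b + \<beta> * (3/4)), (fst v, snd v + \<beta> * 8 * fst v))
      ((a, b + \<beta> * (3/4) + \<beta> * (3/4)), (fst v, snd v + \<beta> * 8 * fst v + \<beta> * (-8) * fst v))"
    using vgen[OF b vals(8), of a "b + \<beta> * (3/4)" "(fst v, snd v + \<beta> * 8 * fst v)"] vals by simp
  have e: "b + \<beta> * (3/4) + \<beta> * (3/4) = y2 - of_int (floor (y2 - b))"
    by (simp add: \<beta>_def \<delta>_def frac_def field_simps)
  have "reach ((a, b), v) ((a, y2 - of_int (floor (y2 - b))), v)"
    using reach_trans[OF r1 r2] e by (simp add: prod_eq_iff)
  then show ?thesis by blast
qed

lemma hmulti:
  assumes "\<bar>\<sigma>\<bar> \<le> 8"
  shows "\<exists>z'. reach (z, v) (z', (fst v + real k * \<sigma> * snd v, snd v))"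
proof (induction k)
  case 0 show ?case using reach_refl by (intro exI[of _ z]) simp
next
  case (Suc k)
  then obtain z' where r: "reach (z, v) (z', (fst v + real k * \<sigma> * snd v, snd v))" by blast
  obtain d where r2: "reach ((fst z', snd z'), (fst v + real k * \<sigma> * snd v, snd v))
      ((fst z' + d, snd z'), (fst v + real k * \<sigma> * snd v + \<sigma> * snd v, snd v))"
    using hslope[OF assms, of "fst z'" "snd z'" "(fst v + real k * \<sigma> * snd v, snd v)"] by auto
  have eq: "(fst v + real k * \<sigma> * snd v + \<sigma> * snd v, snd v) = (fst v + real (Suc k) * \<sigma> * snd v, snd v)"
    by (simp add: distrib_right)
  have "reach (z, v) ((fst z' + d, snd z'), (fst v + real (Suc k) * \<sigma> * snd v, snd v))"
    using reach_trans[OF r r2[unfolded prod.collapse]] unfolding eq .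
  then show ?case by blast
qed

lemma hbig: "\<exists>z'. reach (z, v) (z', (fst v + s * snd v, snd v))"
proof -
  define k :: nat where "k = nat (ceiling (\<bar>s\<bar> / 8)) + 1"
  have "k > 0" by (simp add: k_def)
  then have kpos: "real k > 0" by simp
  have "\<bar>s\<bar> / 8 \<le> real (nat (ceiling (\<bar>s\<bar> / 8)))" by (rule real_nat_ceiling_ge)
  moreover have "real k = real (nat (ceiling (\<bar>s\<bar> / 8))) + 1" by (simp add: k_def)
  ultimately have "\<bar>s\<bar> / 8 \<le> real k" by linarith
  then have "\<bar>s\<bar> \<le> 8 * real k" by simp
  then have "\<bar>s\<bar> / real k \<le> 8" using kpos by (simp only: pos_divide_le_eq)
  moreover have "\<bar>s / real k\<bar> = \<bar>s\<bar> / real k" by (simp add: abs_divide)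
  ultimately have "\<bar>s / real k\<bar> \<le> 8" by simp
  from hmulti[OF this, of z v k] kpos show ?thesis by simp
qed

lemma direction:
  assumes u: "u \<noteq> 0" and w: "fst w \<noteq> 0" "snd w \<noteq> 0"
  shows "\<exists>z' c. c \<noteq> 0 \<and> reach (x, u) (z', c *\<^sub>R w)"
proof -
  obtain z1 v where r1: "reach (x, u) (z1, v)" and v: "fst v \<noteq> 0" "snd v \<noteq> 0"
  proof (cases "fst u = 0")
    case True
    then have u2: "snd u \<noteq> 0" using u by (simp add: prod_eq_iff)
    obtain d where "reach ((fst x, snd x), u) ((fst x + d, snd x), (fst u + 8 * snd u, snd u))"
      using hslope[of 8 "fst x" "snd x" u] by auto
    then show ?thesis using that[of _ "(fst u + 8 * snd u, snd u)"] True u2 by simp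
  next
    case False
    show ?thesis
    proof (cases "snd u = 0")
      case True
      obtain d where "reach ((fst x, snd x), u) ((fst x, snd x + d), (fst u, snd u + 8 * fst u))"
        using vslope[of 8 "fst x" "snd x" u] by auto
      then show ?thesis using that[of _ "(fst u, snd u + 8 * fst u)"] True False by simp
    next
      case False2: False
      show ?thesis using that[OF reach_refl] False False2 by simp
    qed
  qed
  define s where "s = fst w / snd w - fst v / snd v"
  obtain z2 where r2: "reach (z1, v) (z2, (fst v + s * snd v, snd v))" using hbig by blast
  have "(fst v + s * snd v, snd v) = (snd v / snd w) *\<^sub>R w"
    using v w by (simp add: s_def prod_eq_iff field_simps)
  moreover have "snd v / snd w \<noteq> 0" using v w by simp
  ultimately show ?thesis using reach_trans[OF r1 r2] by metis
qed



theorem lemmaA4: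
  fixes x u :: "real \<times> real" and S :: "((real \<times> real) \<times> (real \<times> real)) set"
  assumes "u \<noteq> 0" and "proj_open S" and "S \<noteq> {}"
  shows "\<exists>n. hit_event n x u S \<in> sets Mseq \<and> measure Mseq (hit_event n x u S) > 0"
proof -
  have oS: "open S" and sub: "S \<subseteq> UNIV \<times> (UNIV - {0})"
    and sat: "\<And>y w (k1::int) (k2::int) (c::real). (y, w) \<in> S \<Longrightarrow> c \<noteq> 0 \<Longrightarrow>
        ((fst y + of_int k1, snd y + of_int k2), c *\<^sub>R w) \<in> S"
    using assms(2) unfolding proj_open_def by blast+
  obtain y w where yw: "(y, w) \<in> S" using assms(3) by auto
  obtain \<epsilon> where \<epsilon>: "\<epsilon> > 0" "ball (y, w) \<epsilon> \<subseteq> S" using openE[OF oS yw] by blast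
  define w' where "w' = (if fst w = 0 then \<epsilon>/4 else fst w, if snd w = 0 then \<epsilon>/4 else snd w)"
  have w'nz: "fst w' \<noteq> 0" "snd w' \<noteq> 0" using \<epsilon> by (auto simp: w'_def)
  have d1: "dist (fst w') (fst w) \<le> \<epsilon>/4" "dist (snd w') (snd w) \<le> \<epsilon>/4"
    using \<epsilon> by (auto simp: w'_def dist_real_def)
  have "dist (y, w') (y, w) \<le> dist y y + dist w' w" by (rule dist_pair_le)
  also have "\<dots> = dist (fst w', snd w') (fst w, snd w)" by simp
  also have "\<dots> \<le> dist (fst w') (fst w) + dist (snd w') (snd w)" by (rule dist_pair_le)
  also have "\<dots> < \<epsilon>" using d1 \<epsilon> by simp
  finally have "(y, w') \<in> S" using \<epsilon>(2) by (auto simp: dist_commute)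
  obtain z1 c where c: "c \<noteq> 0" and r1: "reach (x, u) (z1, c *\<^sub>R w')"
    using direction[OF assms(1) w'nz] by blast
  obtain k1 :: int where r2: "reach ((fst z1, snd z1), c *\<^sub>R w') ((fst y - of_int k1, snd z1), c *\<^sub>R w')"
    using htrans by blast
  obtain k2 :: int where r3: "reach ((fst y - of_int k1, snd z1), c *\<^sub>R w') ((fst y - of_int k1, snd y - of_int k2), c *\<^sub>R w')"
    using vtrans by blast
  have "reach (x, u) ((fst y - of_int k1, snd y - of_int k2), c *\<^sub>R w')"
    using reach_trans[OF reach_trans[OF r1 r2[unfolded prod.collapse]] r3] .
  then obtain ps where ps: "\<forall>p\<in>set ps. good p" "valid ps (x, u)"
    "run ps (x, u) = ((fst y - of_int k1, snd y - of_int k2), c *\<^sub>R w')"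
    unfolding reach_def by blast
  have "((fst y + of_int (- k1), snd y + of_int (- k2)), c *\<^sub>R w') \<in> S"
    by (rule sat[OF \<open>(y, w') \<in> S\<close> c])
  then have rS: "run ps (x, u) \<in> S" using ps(3) by simp
  have pg: "\<forall>p\<in>set ps. 0 \<le> fst p \<and> fst p \<le> 1 \<and> 0 \<le> fst (snd p) \<and> fst (snd p) \<le> 1 \<and> snd (snd p) \<in> {1,2}"
    using ps(1) by (simp add: good_def)
  show ?thesis
    using positive_event[OF pg ps(2) oS rS] hit_meas[OF oS] by blast
qed


end
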